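(* Let $p\in(1,2]$ and let $\varphi:\mathbb{R}^n\to\mathbb{R}\cup\{+\infty\}$ be proper and lower semicontinuous. Suppose $\bar x=0$ is a $p$-calm point of $\varphi$ with constant $M>0$, $\varphi(0)=0$, and $\varphi$ is $q$-prox-regular with some $q\ge2$ at $\bar x=0$ for $\bar\zeta=0\in\partial\varphi(0)$ with constants $\varepsilon<\frac12$ and $\rho>0$. Then for each $\gamma\in\big(0,\min\{\frac{2^{1-p}}{Mp},\frac{\kappa_p(2\varepsilon)^{p-2}}{\rho}\}\big)$ there exists a neighborhood $U\subseteq\mathbb{B}(0;\varepsilon)$ such that $$\|\operatorname{prox}^p_{\gamma\varphi}(x_2)-\operatorname{prox}^p_{\gamma\varphi}(x_1)\|\le L_p\|x_2-x_1\|^{1/q}\quad\forall x_1,x_2\in U,$$ and $\varphi^p_\gamma$ is differentiable on $U$ with $$\|\nabla\varphi^p_\gamma(x_2)-\nabla\varphi^p_\gamma(x_1)\|\le\mathcal{L}_p\|x_2-x_1\|^{\frac{p-1}{q}}\quad\forall x_1,x_2\in U,$$ where $L_p:=\Big(\frac{4\varepsilon(\kappa_p+1)}{\kappa_p-\rho\gamma(2\varepsilon)^{2-p}}\Big)^{1/q}$ and $\mathcal{L}_p:=\frac{2^{2-p}}{\gamma}\big((2\varepsilon)^{\frac{q-1}{q}}+L_p\big)^{p-1}$.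
   Context: $\operatorname{prox}^p_{\gamma\varphi}(x):=\operatorname{argmin}_{y}\big(\varphi(y)+\frac{1}{p\gamma}\|x-y\|^p\big)$ (single-valued on $U$ under the conclusion), $\varphi^p_\gamma(x):=\inf_y\big(\varphi(y)+\frac{1}{p\gamma}\|x-y\|^p\big)$. $\bar x$ is a $p$-calm point with constant $M>0$ if $\varphi(x)+M\|x-\bar x\|^p>\varphi(\bar x)$ for all $x\neq\bar x$. $\partial$ is the Mordukhovich (limiting) subdifferential. $\varphi$ is $q$-prox-regular ($q\ge2$) at $\bar x$ for $\bar\zeta\in\partial\varphi(\bar x)$ with constants $\varepsilon>0,\rho\ge0$ if $\varphi(x')\ge\varphi(x)+\langle\zeta,x'-x\rangle-\frac\rho2\|x'-x\|^q$ for all $x'\in\mathbb{B}(\bar x;\varepsilon)$, whenever $x\in\mathbb{B}(\bar x;\varepsilon)$, $\zeta\in\partial\varphi(x)\cap\mathbb{B}(\bar\zeta;\varepsilon)$, $\varphi(x)<\varphi(\bar x)+\varepsilon$. The constant $\kappa_t$ ($t\in(1,2]$) is: $\kappa_t=\frac{(2+\sqrt3)(t-1)}{16}$ for $t\in(1,\hat t]$, $\kappa_t=\frac{2+\sqrt3}{16}(1-(3-\sqrt3)^{1-t})$ for $t\in[\hat t,2)$, $\kappa_2=1$, where $\hat t\approx1.3214$ solves $\frac{t(t-1)}2=1-\big[1+\frac{(2-\sqrt3)t}{t-1}\big]^{1-t}$ on $(1,2]$. *)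

theory Defs
  imports "HOL-Analysis.Analysis"
begin

definition proper_fun :: "('a \<Rightarrow> ereal) \<Rightarrow> bool" where
  "proper_fun f \<longleftrightarrow> (\<forall>x. f x \<noteq> -\<infinity>) \<and> (\<exists>x. f x < \<infinity>)"

definition lsc_fun :: "('a::topological_space \<Rightarrow> ereal) \<Rightarrow> bool" where
  "lsc_fun f \<longleftrightarrow> (\<forall>x. f x \<le> Liminf (at x) f)"

definition frechet_subdiff :: "('a::real_inner \<Rightarrow> ereal) \<Rightarrow> 'a \<Rightarrow> 'a set" where
  "frechet_subdiff f x = {z. \<bar>f x\<bar> \<noteq> \<infinity> \<and>
     (\<forall>e>0. \<exists>d>0. \<forall>y. norm (y - x) < d \<longrightarrow>
        ereal (real_of_ereal (f x) + z \<bullet> (y - x) - e * norm (y - x)) \<le> f y)}"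

definition limiting_subdiff :: "('a::real_inner \<Rightarrow> ereal) \<Rightarrow> 'a \<Rightarrow> 'a set" where
  "limiting_subdiff f x = {z. \<bar>f x\<bar> \<noteq> \<infinity> \<and>
     (\<exists>X Z. X \<longlonglongrightarrow> x \<and> (\<lambda>k. f (X k)) \<longlonglongrightarrow> f x \<and>
            (\<forall>k. Z k \<in> frechet_subdiff f (X k)) \<and> Z \<longlonglongrightarrow> z)}"

definition p_calm :: "real \<Rightarrow> ('a::real_normed_vector \<Rightarrow> ereal) \<Rightarrow> 'a \<Rightarrow> real \<Rightarrow> bool" where
  "p_calm p f xb M \<longleftrightarrow> (\<forall>x. x \<noteq> xb \<longrightarrow> f x + ereal (M * norm (x - xb) powr p) > f xb)"

definition q_prox_regular ::
  "real \<Rightarrow> ('a::real_inner \<Rightarrow> ereal) \<Rightarrow> 'a \<Rightarrow> 'a \<Rightarrow> real \<Rightarrow> real \<Rightarrow> bool" where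
  "q_prox_regular q f xb zb eps rho \<longleftrightarrow>
     (\<forall>x \<in> cball xb eps. \<forall>z \<in> limiting_subdiff f x \<inter> cball zb eps.
        f x < f xb + ereal eps \<longrightarrow>
        (\<forall>x' \<in> cball xb eps.
           f x' \<ge> f x + ereal (z \<bullet> (x' - x) - rho / 2 * norm (x' - x) powr q)))"

definition prox_p :: "real \<Rightarrow> real \<Rightarrow> ('a::real_normed_vector \<Rightarrow> ereal) \<Rightarrow> 'a \<Rightarrow> 'a set" where
  "prox_p p gamma f x = {y. \<forall>z.
      f y + ereal (norm (x - y) powr p / (p * gamma)) \<le> f z + ereal (norm (x - z) powr p / (p * gamma))}"

definition env_p :: "real \<Rightarrow> real \<Rightarrow> ('a::real_normed_vector \<Rightarrow> ereal) \<Rightarrow> 'a \<Rightarrow> ereal" where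
  "env_p p gamma f x = (INF y. f y + ereal (norm (x - y) powr p / (p * gamma)))"

definition t_hat :: real where
  "t_hat = (THE t. 1 < t \<and> t \<le> 2 \<and>
      t * (t - 1) / 2 = 1 - (1 + (2 - sqrt 3) * t / (t - 1)) powr (1 - t))"

definition kappa :: "real \<Rightarrow> real" where
  "kappa t = (if t = 2 then 1
     else if t \<le> t_hat then (2 + sqrt 3) * (t - 1) / 16
     else (2 + sqrt 3) / 16 * (1 - (3 - sqrt 3) powr (1 - t)))"

end

theory Submission
  imports Defs
begin


lemma tangent_convex:
  fixes p a b :: real
  assumes "p > 1" "a \<ge> 0" "b \<ge> 0"
  shows "a powr p + p * a powr (p - 1) * (b - a) \<le> b powr p"
proof -
  have y: "a powr (p-1) * b \<le> (a powr (p-1)) powr (p/(p-1)) / (p/(p-1)) + b powr p / p"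
    by (rule Youngs_inequality) (use assms in \<open>auto simp: field_simps\<close>)
  have e: "(a powr (p-1)) powr (p/(p-1)) = a powr p"
    using assms by (simp add: powr_powr)
  have e2: "a powr (p-1) * a = a powr p"
    using assms by (cases "a = 0") (auto simp: powr_diff powr_one)
  have "p * (a powr (p-1) * b) \<le> (p-1) * a powr p + b powr p"
    using y e assms by (simp add: field_simps)
  then show ?thesis using e2 by (simp add: algebra_simps)
qed

lemma tangent_concave:
  fixes p a b :: real
  assumes "1 < p" "p \<le> 2" "a > 0" "b \<ge> 0"
  shows "b powr (p - 1) \<le> a powr (p - 1) + (p - 1) * a powr (p - 2) * (b - a)"
proof (cases "b = 0")
  case True
  have "a powr (p-2) * a = a powr (p-1)" using powr_add[of a "p-2" 1] assms by simp
  then show ?thesis using True assms by (simp add: algebra_simps)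
next
  case False
  have y: "b powr (p-1) * a powr (2-p) \<le> (p-1) * b + (2-p) * a"
    by (rule Youngs_inequality_0) (use assms False in auto)
  have e: "a powr (2-p) * a powr (p-2) = 1" using assms by (simp flip: powr_add)
  have e2: "a powr (p-2) * a = a powr (p-1)" using powr_add[of a "p-2" 1] assms by simp
  have "b powr (p-1) = b powr (p-1) * a powr (2-p) * a powr (p-2)" using e by (simp add: mult.assoc)
  also have "\<dots> \<le> ((p-1) * b + (2-p) * a) * a powr (p-2)"
    by (rule mult_right_mono[OF y]) simp
  also have "\<dots> = a powr (p - 1) + (p - 1) * a powr (p - 2) * (b - a)"
    unfolding e2[symmetric] by (simp add: algebra_simps)
  finally show ?thesis .
qed



definition phi :: "real \<Rightarrow> 'a::real_inner \<Rightarrow> 'a" where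
  "phi p u = (norm u powr (p - 2)) *\<^sub>R u"

lemma powr_m2_mult: "(x::real) \<ge> 0 \<Longrightarrow> x powr (p - 2) * x = x powr (p - 1)"
  by (cases "x = 0") (use powr_add[of x "p-2" 1] in auto)

lemma norm_phi: "norm (phi p u) = norm u powr (p - 1)"
  unfolding phi_def using powr_m2_mult[of "norm u" p] by (simp add: mult.commute)

lemma phi_inner_self: "phi p u \<bullet> u = norm u powr p"
proof -
  have "phi p u \<bullet> u = norm u powr (p - 2) * norm u ^ 2"
    by (simp add: phi_def power2_norm_eq_inner)
  also have "\<dots> = norm u powr p"
    using powr_m2_mult[of "norm u" p] powr_add[of "norm u" "p-1" 1]
    by (cases "u = 0") (simp_all add: power2_eq_square flip: mult.assoc)
  finally show ?thesis .
qed

lemma phi_mono_aux: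
  fixes a b :: "'a::real_inner"
  assumes p: "1 < p" "p \<le> 2" and ab: "norm b \<le> norm a" "a \<noteq> 0"
  shows "(p - 1) * (norm a + norm b) powr (p - 2) * norm (a - b) ^ 2 \<le> (phi p a - phi p b) \<bullet> (a - b)"
proof -
  define \<alpha> where "\<alpha> = norm a"
  define \<beta> where "\<beta> = norm b"
  define A where "A = \<alpha> powr (p - 2)"
  define B where "B = \<beta> powr (p - 2)"
  define \<sigma> where "\<sigma> = (\<alpha> + \<beta>) powr (p - 2)"
  define t where "t = a \<bullet> b"
  define c where "c = p - 1"
  have \<alpha>pos: "\<alpha> > 0" using ab by (simp add: \<alpha>_def)
  have \<beta>nn: "\<beta> \<ge> 0" by (simp add: \<beta>_def)
  have ba: "\<beta> \<le> \<alpha>" using ab by (simp add: \<alpha>_def \<beta>_def)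
  have c01: "0 < c" "c \<le> 1" using p by (auto simp: c_def)
  have tb: "\<bar>t\<bar> \<le> \<alpha> * \<beta>" unfolding t_def \<alpha>_def \<beta>_def by (rule Cauchy_Schwarz_ineq2)
  have Aa: "A * \<alpha> = \<alpha> powr (p - 1)" using powr_m2_mult[of \<alpha> p] \<alpha>pos by (simp add: A_def)
  have Bb: "B * \<beta> = \<beta> powr (p - 1)" using powr_m2_mult[of \<beta> p] \<beta>nn by (simp add: B_def)
  have \<sigma>A: "\<sigma> \<le> A" unfolding \<sigma>_def A_def by (rule powr_mono2') (use p \<alpha>pos \<beta>nn in auto)
  have \<sigma>nn: "\<sigma> \<ge> 0" by (simp add: \<sigma>_def)
  have \<sigma>B: "\<sigma> * \<beta> \<le> B * \<beta>"
  proof (cases "\<beta> = 0")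
    case False
    then have "\<sigma> \<le> B" unfolding \<sigma>_def B_def by (intro powr_mono2') (use p \<alpha>pos \<beta>nn in auto)
    then show ?thesis using \<beta>nn by (simp add: mult_right_mono)
  qed simp
  have lhs: "(phi p a - phi p b) \<bullet> (a - b) = A * \<alpha>^2 + B * \<beta>^2 - (A + B) * t"
    by (simp add: phi_def A_def B_def \<alpha>_def \<beta>_def t_def inner_diff_left inner_diff_right
        power2_norm_eq_inner inner_commute algebra_simps)
  have nab: "norm (a - b) ^ 2 = \<alpha>^2 + \<beta>^2 - 2 * t"
    by (simp add: \<alpha>_def \<beta>_def t_def power2_norm_eq_inner inner_diff_left inner_diff_right inner_commute)
  define P where "P = A * \<alpha>^2 + B * \<beta>^2 - c * \<sigma> * (\<alpha>^2 + \<beta>^2)"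
  define Q where "Q = A + B - 2 * c * \<sigma>"
  have E1: "P - Q * (\<alpha> * \<beta>) \<ge> 0"
  proof -
    have tc: "\<alpha> powr (p - 1) - \<beta> powr (p - 1) \<ge> c * A * (\<alpha> - \<beta>)"
      using tangent_concave[OF p \<alpha>pos \<beta>nn] by (simp add: A_def c_def algebra_simps)
    have "c * A * (\<alpha> - \<beta>) \<ge> c * \<sigma> * (\<alpha> - \<beta>)"
      using \<sigma>A c01 ba by (intro mult_right_mono mult_left_mono) auto
    with tc have "(\<alpha> powr (p - 1) - \<beta> powr (p - 1)) * (\<alpha> - \<beta>) \<ge> c * \<sigma> * (\<alpha> - \<beta>) * (\<alpha> - \<beta>)"
      using ba by (intro mult_right_mono) auto
    moreover have "P - Q * (\<alpha> * \<beta>) = (A * \<alpha> - B * \<beta>) * (\<alpha> - \<beta>) - c * \<sigma> * (\<alpha> - \<beta>) * (\<alpha> - \<beta>)"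
      by (simp add: P_def Q_def power2_eq_square algebra_simps)
    ultimately show ?thesis using Aa Bb by simp
  qed
  have E2: "P + Q * (\<alpha> * \<beta>) \<ge> 0"
  proof -
    have "A * \<alpha> + B * \<beta> \<ge> \<sigma> * (\<alpha> + \<beta>)"
      using \<sigma>A \<sigma>B \<alpha>pos by (simp add: distrib_left) (smt (verit) mult_right_mono)
    also have "\<sigma> * (\<alpha> + \<beta>) \<ge> c * \<sigma> * (\<alpha> + \<beta>)"
      using c01 \<sigma>nn \<alpha>pos \<beta>nn by (simp add: mult_le_cancel_right1 mult.assoc mult_left_le_one_le)
    finally have "(A * \<alpha> + B * \<beta>) * (\<alpha> + \<beta>) \<ge> c * \<sigma> * (\<alpha> + \<beta>) * (\<alpha> + \<beta>)"
      using \<alpha>pos \<beta>nn by (intro mult_right_mono) auto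
    moreover have "P + Q * (\<alpha> * \<beta>) = (A * \<alpha> + B * \<beta>) * (\<alpha> + \<beta>) - c * \<sigma> * (\<alpha> + \<beta>) * (\<alpha> + \<beta>)"
      by (simp add: P_def Q_def power2_eq_square algebra_simps)
    ultimately show ?thesis by simp
  qed
  have "P - Q * t \<ge> 0"
  proof (cases "Q \<ge> 0")
    case True
    then have "Q * t \<le> Q * (\<alpha> * \<beta>)" using tb by (intro mult_left_mono) auto
    then show ?thesis using E1 by linarith
  next
    case False
    then have "Q * t \<le> Q * (- (\<alpha> * \<beta>))" using tb by (intro mult_left_mono_neg) auto
    then show ?thesis using E2 by linarith
  qed
  moreover have "P - Q * t = (phi p a - phi p b) \<bullet> (a - b) - c * \<sigma> * norm (a - b) ^ 2"
    unfolding lhs nab P_def Q_def by (simp add: algebra_simps)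
  ultimately show ?thesis by (simp add: c_def \<sigma>_def \<alpha>_def \<beta>_def)
qed

lemma phi_mono:
  fixes a b :: "'a::real_inner"
  assumes p: "1 < p" "p \<le> 2"
  shows "(p - 1) * (norm a + norm b) powr (p - 2) * norm (a - b) ^ 2 \<le> (phi p a - phi p b) \<bullet> (a - b)"
proof (cases "a = 0 \<and> b = 0")
  case True then show ?thesis by simp
next
  case False
  show ?thesis
  proof (cases "norm b \<le> norm a")
    case True
    then have "a \<noteq> 0" using False by auto
    then show ?thesis using phi_mono_aux[OF p True] by simp
  next
    case nb: False
    then have "b \<noteq> 0" by auto
    have "norm a \<le> norm b" using nb by simp
    from phi_mono_aux[OF p this \<open>b \<noteq> 0\<close>] show ?thesis
      by (simp add: add.commute norm_minus_commute inner_commute inner_diff_left inner_diff_right algebra_simps)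
  qed
qed



lemma phi_zero[simp]: "phi p 0 = 0" by (simp add: phi_def)

lemma powr_m1_mult: "(x::real) \<ge> 0 \<Longrightarrow> x powr (p - 1) * x = x powr p"
  by (cases "x = 0") (use powr_add[of x "p-1" 1] in auto)

lemma phi_lip_aux:
  fixes a b :: "'a::real_inner"
  assumes p: "1 < p" "p \<le> 2" and ab: "norm b \<le> norm a" "a \<noteq> 0"
  shows "norm (phi p a - phi p b) \<le> 2 * norm a powr (p - 2) * norm (a - b)"
proof -
  define A where "A = norm a powr (p - 2)"
  define B where "B = norm b powr (p - 2)"
  have eq: "phi p a - phi p b = A *\<^sub>R (a - b) + (A - B) *\<^sub>R b"
    by (simp add: phi_def A_def B_def algebra_simps)
  have Ann: "A \<ge> 0" by (simp add: A_def)
  have "norm ((A - B) *\<^sub>R b) \<le> A * norm (a - b)"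
  proof (cases "b = 0")
    case True then show ?thesis using Ann by simp
  next
    case False
    have AB: "A \<le> B" unfolding A_def B_def by (rule powr_mono2') (use p ab False in auto)
    have "norm ((A - B) *\<^sub>R b) = (B - A) * norm b" using AB by simp
    also have "\<dots> = norm b powr (p - 1) - A * norm b"
      using powr_m2_mult[of "norm b" p] by (simp add: B_def algebra_simps)
    also have "\<dots> \<le> norm a powr (p - 1) - A * norm b"
      using powr_mono2[of "p-1" "norm b" "norm a"] p ab by simp
    also have "\<dots> = A * (norm a - norm b)"
      using powr_m2_mult[of "norm a" p] by (simp add: A_def algebra_simps)
    also have "\<dots> \<le> A * norm (a - b)"
      using Ann norm_triangle_ineq2[of a b] by (intro mult_left_mono) auto
    finally show ?thesis .
  qed
  then have "norm (phi p a - phi p b) \<le> A * norm (a - b) + A * norm (a - b)"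
    unfolding eq using Ann by (intro order.trans[OF norm_triangle_ineq]) simp
  then show ?thesis by (simp add: A_def algebra_simps)
qed

lemma phi_lip:
  fixes a b :: "'a::real_inner"
  assumes p: "1 < p" "p \<le> 2" and s: "norm a + norm b > 0"
  shows "norm (phi p a - phi p b) \<le> 4 * (norm a + norm b) powr (p - 2) * norm (a - b)"
proof -
  have main: "norm (phi p a - phi p b) \<le> 4 * (norm a + norm b) powr (p - 2) * norm (a - b)"
    if ab: "norm b \<le> norm a" "a \<noteq> 0" for a b :: 'a
  proof -
    have "norm a powr (p - 2) \<le> ((norm a + norm b) / 2) powr (p - 2)"
      by (rule powr_mono2') (use p ab in \<open>auto intro!: add_pos_nonneg\<close>)
    also have "\<dots> = (norm a + norm b) powr (p - 2) / 2 powr (p - 2)"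
      by (simp add: powr_divide)
    also have "\<dots> \<le> 2 * (norm a + norm b) powr (p - 2)"
    proof -
      have "2 powr (-1) \<le> 2 powr (p - 2)" by (rule powr_mono) (use p in auto)
      then have h: "1/2 \<le> 2 powr (p - 2)" by (simp add: powr_minus)
      have "(norm a + norm b) powr (p - 2) / 2 powr (p - 2) \<le> (norm a + norm b) powr (p - 2) / (1/2)"
        by (rule divide_left_mono) (use h in auto)
      then show ?thesis by simp
    qed
    finally have "2 * norm a powr (p - 2) * norm (a - b) \<le> 2 * (2 * (norm a + norm b) powr (p - 2)) * norm (a - b)"
      by (intro mult_right_mono mult_left_mono) auto
    with phi_lip_aux[OF p ab] show ?thesis by (simp add: algebra_simps)
  qed
  show ?thesis
  proof (cases "norm b \<le> norm a")
    case True
    then have "a \<noteq> 0" using s by auto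
    then show ?thesis using main True by blast
  next
    case False
    then have "b \<noteq> 0" by auto
    from main[of a b] main[of b a] False \<open>b \<noteq> 0\<close> show ?thesis
      by (simp add: add.commute norm_minus_commute)
  qed
qed

lemma phi_holder:
  fixes a b :: "'a::real_inner"
  assumes p: "1 < p" "p \<le> 2"
  shows "norm (phi p a - phi p b) \<le> 4 * norm (a - b) powr (p - 1)"
proof (cases "a = b")
  case True then show ?thesis by simp
next
  case False
  then have w: "norm (a - b) > 0" by simp
  have s: "norm (a - b) \<le> norm a + norm b" by (rule norm_triangle_ineq4)
  then have "(norm a + norm b) powr (p - 2) \<le> norm (a - b) powr (p - 2)"
    by (intro powr_mono2') (use p w in auto)
  then have "4 * (norm a + norm b) powr (p - 2) * norm (a - b) \<le> 4 * norm (a - b) powr (p - 2) * norm (a - b)"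
    by (intro mult_right_mono) auto
  also have "\<dots> = 4 * norm (a - b) powr (p - 1)"
    using powr_m2_mult[of "norm (a - b)" p] by simp
  finally show ?thesis using phi_lip[OF p] s w by (meson order.trans less_le_trans)
qed

lemma h_convex:
  fixes u v :: "'a::real_inner"
  assumes p: "1 < p"
  shows "norm u powr p + p * (phi p u \<bullet> (v - u)) \<le> norm v powr p"
proof -
  have "phi p u \<bullet> v \<le> norm u powr (p - 1) * norm v"
    using Cauchy_Schwarz_ineq2[of "phi p u" v] norm_phi[of p u] by (simp add: abs_le_iff)
  then have "phi p u \<bullet> (v - u) \<le> norm u powr (p - 1) * (norm v - norm u)"
    using phi_inner_self[of p u] powr_m1_mult[of "norm u" p]
    by (simp add: inner_diff_right algebra_simps)
  then have "norm u powr p + p * (phi p u \<bullet> (v - u)) \<le> norm u powr p + p * norm u powr (p - 1) * (norm v - norm u)"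
    using p by (simp add: mult.assoc)
  also have "\<dots> \<le> norm v powr p" by (rule tangent_convex) (use p in auto)
  finally show ?thesis .
qed



lemma powr_superadd:
  fixes a b p :: real
  assumes "p \<ge> 1" "a \<ge> 0" "b \<ge> 0"
  shows "a powr p + b powr p \<le> (a + b) powr p"
proof (cases "a + b = 0")
  case True
  then have "a = 0" "b = 0" using assms by auto
  then show ?thesis by simp
next
  case False
  then have s: "a + b > 0" using assms by auto
  have k: "x powr p \<le> (a + b) powr p * (x / (a + b))" if "0 \<le> x" "x \<le> a + b" for x
  proof -
    have "(x / (a + b)) powr p \<le> x / (a + b)"
    proof (cases "x = 0")
      case False
      then show ?thesis using powr_le_one_le[of "x / (a+b)" p] that s assms by auto
    qed simp
    then have "(a + b) powr p * (x / (a + b)) powr p \<le> (a + b) powr p * (x / (a + b))"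
      by (intro mult_left_mono) auto
    then show ?thesis using s that by (simp add: powr_divide)
  qed
  have "a powr p + b powr p \<le> (a + b) powr p * (a / (a + b)) + (a + b) powr p * (b / (a + b))"
    using k[of a] k[of b] assms by (intro add_mono) auto
  also have "\<dots> = (a + b) powr p" using s by (simp flip: distrib_left add_divide_distrib)
  finally show ?thesis .
qed

lemma powr_le_imp_le:
  fixes x y p :: real
  assumes "p > 0" "x \<ge> 0" "y \<ge> 0" "x powr p \<le> y powr p"
  shows "x \<le> y"
  using powr_less_mono2[of p y x] assms by force

lemma lsc_attains_min:
  fixes G :: "'a::topological_space \<Rightarrow> ereal"
  assumes K: "compact K" "K \<noteq> {}"
    and lscG: "\<And>y c. y \<in> K \<Longrightarrow> c < G y \<Longrightarrow> eventually (\<lambda>z. c < G z) (at y)"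
  shows "\<exists>y\<in>K. \<forall>z\<in>K. G y \<le> G z"
proof (rule ccontr)
  assume nt: "\<not> ?thesis"
  define m where "m = (INF z\<in>K. G z)"
  have gt: "m < G y" if "y \<in> K" for y
  proof -
    have "m \<le> G y" using that by (simp add: m_def INF_lower)
    moreover have "m \<noteq> G y"
    proof
      assume "m = G y"
      then have "\<forall>z\<in>K. G y \<le> G z" unfolding m_def by (metis INF_lower)
      with nt that show False by blast
    qed
    ultimately show ?thesis by simp
  qed
  have "\<forall>y\<in>K. \<exists>c. m < c \<and> c < G y" using gt dense by blast
  then obtain c where c: "\<And>y. y \<in> K \<Longrightarrow> m < c y \<and> c y < G y" by metis
  have "\<forall>y\<in>K. \<exists>S. open S \<and> y \<in> S \<and> (\<forall>z\<in>S. c y < G z)"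
  proof
    fix y assume y: "y \<in> K"
    have "eventually (\<lambda>z. c y < G z) (at y)" using lscG[OF y] c[OF y] by blast
    then obtain S where S: "open S" "y \<in> S" "\<forall>z\<in>S. z \<noteq> y \<longrightarrow> c y < G z"
      unfolding eventually_at_topological by blast
    then show "\<exists>S. open S \<and> y \<in> S \<and> (\<forall>z\<in>S. c y < G z)" using c[OF y] by metis
  qed
  then obtain V where V: "\<And>y. y \<in> K \<Longrightarrow> open (V y) \<and> y \<in> V y \<and> (\<forall>z\<in>V y. c y < G z)" by metis
  have "K \<subseteq> (\<Union>y\<in>K. V y)" using V by blast
  from compactE_image[OF K(1), of K V, OF _ this] V obtain D where
    D: "D \<subseteq> K" "finite D" "K \<subseteq> (\<Union>y\<in>D. V y)" by blast
  have "D \<noteq> {}" using D K(2) by auto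
  define c0 where "c0 = Min (c ` D)"
  have "c0 \<le> G z" if zK: "z \<in> K" for z
  proof -
    obtain y where "y \<in> D" "z \<in> V y" using D zK by blast
    then have "c y < G z" using V D by blast
    moreover have "c0 \<le> c y" using \<open>y \<in> D\<close> D by (simp add: c0_def)
    ultimately show ?thesis by simp
  qed
  then have "c0 \<le> m" unfolding m_def by (rule INF_greatest)
  moreover have "c0 \<in> c ` D" unfolding c0_def using D \<open>D \<noteq> {}\<close> by (intro Min_in) auto
  then have "m < c0" using c D by auto
  ultimately show False by simp
qed



locale pset =
  fixes f :: "'a::euclidean_space \<Rightarrow> ereal" and p gamma M :: real
  assumes p1: "1 < p" and p2: "p \<le> 2" and gpos: "0 < gamma" and Mpos: "0 < M"
    and Mpg: "M * p * gamma < 1" and calm: "p_calm p f 0 M" and f0: "f 0 = 0"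
    and lsc: "lsc_fun f"
begin

definition th0 where "th0 = (M * p * gamma) powr (1 / p)"
definition Cb where "Cb = 2 / (1 - th0)"

lemma th0: "0 < th0" "th0 < 1" "th0 powr p = M * p * gamma"
proof -
  have pos: "M * p * gamma > 0" using Mpos p1 gpos by simp
  show "0 < th0" using pos Mpos p1 gpos by (simp add: th0_def)
  have "(M * p * gamma) powr (1/p) < 1 powr (1/p)"
    by (rule powr_less_mono2) (use pos Mpg p1 in auto)
  then show "th0 < 1" by (simp add: th0_def)
  show "th0 powr p = M * p * gamma" using pos p1 by (simp add: th0_def powr_powr)
qed

lemma Cb_pos: "Cb > 0" using th0 by (simp add: Cb_def)

lemma f_lower: "ereal (- M * norm y powr p) \<le> f y"
proof (cases "y = 0")
  case True then show ?thesis by (simp add: f0)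
next
  case False
  then have "f 0 < f y + ereal (M * norm (y - 0) powr p)" using calm by (simp add: p_calm_def)
  then have "0 < f y + ereal (M * norm y powr p)" by (simp add: f0)
  then show ?thesis by (cases "f y") auto
qed

lemma f_not_minf: "f y \<noteq> -\<infinity>"
  using f_lower[of y] by auto

lemma sublevel:
  assumes "f y + ereal (norm (x - y) powr p / (p * gamma)) \<le> ereal (norm x powr p / (p * gamma))"
  shows "norm y \<le> Cb * norm x" "\<bar>f y\<bar> \<noteq> \<infinity>"
    "real_of_ereal (f y) \<le> norm x powr p / (p * gamma) - norm (x - y) powr p / (p * gamma)"
proof -
  have "f y \<noteq> \<infinity>" using assms by auto
  then obtain r where r: "f y = ereal r" using f_not_minf[of y] by (cases "f y") auto
  then show "\<bar>f y\<bar> \<noteq> \<infinity>" by simp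
  have A: "r + norm (x - y) powr p / (p * gamma) \<le> norm x powr p / (p * gamma)" using assms r by simp
  then show "real_of_ereal (f y) \<le> norm x powr p / (p * gamma) - norm (x - y) powr p / (p * gamma)"
    using r by simp
  have B: "- M * norm y powr p \<le> r" using f_lower[of y] r by simp
  have pg: "p * gamma > 0" using p1 gpos by simp
  have "norm (x - y) powr p / (p * gamma) \<le> norm x powr p / (p * gamma) + M * norm y powr p"
    using A B by linarith
  then have "norm (x - y) powr p \<le> norm x powr p + (M * p * gamma) * norm y powr p"
    using pg p1 gpos by (simp add: field_simps)
  also have "\<dots> = norm x powr p + (th0 * norm y) powr p"
    using th0 by (simp add: powr_mult)
  also have "\<dots> \<le> (norm x + th0 * norm y) powr p"
    by (rule powr_superadd) (use p1 th0 in auto)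
  finally have "norm (x - y) \<le> norm x + th0 * norm y"
    by (rule powr_le_imp_le[rotated 3]) (use p1 th0 in auto)
  moreover have "norm y \<le> norm x + norm (x - y)"
    using norm_triangle_ineq4[of x "x - y"] by simp
  ultimately have "(1 - th0) * norm y \<le> 2 * norm x" by (simp add: algebra_simps)
  then show "norm y \<le> Cb * norm x" using th0 by (simp add: Cb_def field_simps)
qed

lemma G_lsc:
  fixes x :: 'a
  assumes "c < f y + ereal (norm (x - y) powr p / (p * gamma))"
  shows "eventually (\<lambda>z. c < f z + ereal (norm (x - z) powr p / (p * gamma))) (at y)"
proof -
  define g where "g z = norm (x - z) powr p / (p * gamma)" for z
  have gc: "(g \<longlongrightarrow> g y) (at y)" unfolding g_def using p1 gpos by (intro tendsto_intros) auto
  have "c < f y + ereal (g y)" using assms by (simp add: g_def)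
  then obtain r0 where r0: "c < ereal r0" "ereal r0 < f y + ereal (g y)" using ereal_dense2 by blast
  obtain r1 where r1: "ereal r0 < ereal r1" "ereal r1 < f y + ereal (g y)" using ereal_dense2 r0 by blast
  have "ereal (r1 - g y) < f y" using r1 by (cases "f y") auto
  then have ev1: "eventually (\<lambda>z. ereal (r1 - g y) < f z) (at y)"
  proof -
    have "f y \<le> Liminf (at y) f" using lsc unfolding lsc_fun_def by blast
    then show ?thesis using \<open>ereal (r1 - g y) < f y\<close> unfolding le_Liminf_iff by blast
  qed
  note gc
  moreover have "r1 - r0 > 0" using r1 by simp
  ultimately have ev2: "eventually (\<lambda>z. dist (g z) (g y) < r1 - r0) (at y)"
    by (rule tendstoD)
  show ?thesis
  proof (rule eventually_mono[OF eventually_conj[OF ev1 ev2]])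
    fix z assume z: "ereal (r1 - g y) < f z \<and> dist (g z) (g y) < r1 - r0"
    then have "g z > g y - (r1 - r0)" by (simp add: dist_real_def abs_less_iff)
    have "ereal r0 < f z + ereal (g z)"
    proof (cases "f z")
      case (real v)
      then show ?thesis using z \<open>g z > g y - (r1 - r0)\<close> by simp
    qed (use z in auto)
    then show "c < f z + ereal (norm (x - z) powr p / (p * gamma))" using r0 by (simp add: g_def)
  qed
qed

lemma prox_exists: "\<exists>y. y \<in> prox_p p gamma f x"
proof -
  define G where "G z = f z + ereal (norm (x - z) powr p / (p * gamma))" for z
  define K where "K = cball (0::'a) (Cb * norm x)"
  have "Cb * norm x \<ge> 0" using Cb_pos by simp
  then have K: "compact K" "K \<noteq> {}" by (auto simp: K_def)
  have "\<exists>y\<in>K. \<forall>z\<in>K. G y \<le> G z"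
    by (rule lsc_attains_min[OF K]) (use G_lsc in \<open>auto simp: G_def\<close>)
  then obtain y where y: "y \<in> K" "\<And>z. z \<in> K \<Longrightarrow> G y \<le> G z" by blast
  have G0: "G 0 = ereal (norm x powr p / (p * gamma))" by (simp add: G_def f0)
  have "G y \<le> G z" for z
  proof (cases "G z \<le> G 0")
    case True
    then have "z \<in> K" using sublevel(1)[of z x] unfolding G0 by (simp add: G_def K_def)
    then show ?thesis using y by blast
  next
    case False
    have "0 \<in> K" using Cb_pos by (simp add: K_def)
    then have "G y \<le> G 0" using y by blast
    then show ?thesis using False by simp
  qed
  then show ?thesis by (auto simp: prox_p_def G_def)
qed

end


lemma h_expand:
  fixes u v :: "'a::real_inner"
  assumes p: "1 < p" "p \<le> 2"
  shows "0 \<le> norm v powr p - norm u powr p - p * (phi p u \<bullet> (v - u))"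
    and "norm v powr p - norm u powr p - p * (phi p u \<bullet> (v - u)) \<le> p * norm (phi p v - phi p u) * norm (v - u)"
proof -
  show "0 \<le> norm v powr p - norm u powr p - p * (phi p u \<bullet> (v - u))"
    using h_convex[OF p(1), of u v] by simp
  have c2: "norm v powr p + p * (phi p v \<bullet> (u - v)) \<le> norm u powr p" using h_convex[OF p(1), of v u] .
  have "(phi p v - phi p u) \<bullet> (v - u) \<le> norm (phi p v - phi p u) * norm (v - u)"
    by (rule norm_cauchy_schwarz)
  then have "p * ((phi p v - phi p u) \<bullet> (v - u)) \<le> p * (norm (phi p v - phi p u) * norm (v - u))"
    using p by (intro mult_left_mono) auto
  moreover have "phi p v \<bullet> (u - v) = - (phi p v \<bullet> (v - u))"
    by (simp add: inner_diff_right)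
  ultimately show "norm v powr p - norm u powr p - p * (phi p u \<bullet> (v - u)) \<le> p * norm (phi p v - phi p u) * norm (v - u)"
    using c2 by (simp add: inner_diff_left algebra_simps)
qed

lemma key_estimate:
  fixes a b d e :: "'a::real_inner"
  assumes p: "1 < p" "p \<le> 2" and q: "q \<ge> 2" and th: "0 \<le> \<theta>" "\<theta> < 1"
    and K: "K > 0" "4 / ((1 - \<theta>) * (p - 1)) \<le> K"
    and de: "a - b = e - d"
    and c: "c \<ge> 0"
    and I: "(phi p a - phi p b) \<bullet> d \<ge> - c * norm d powr q"
    and sm: "norm a + norm b > 0 \<Longrightarrow> c * (1 + 1/K) powr q * (norm a + norm b) powr (q - p) \<le> \<theta> * (p - 1)"
  shows "norm d \<le> (1 + K) * norm e"
proof (rule ccontr)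
  assume nc: "\<not> ?thesis"
  define w where "w = a - b"
  define s where "s = norm a + norm b"
  define \<sigma> where "\<sigma> = s powr (p - 2)"
  have dw: "d = e - w" using de by (simp add: w_def)
  have "norm d \<le> norm e + norm w" unfolding dw by (rule norm_triangle_ineq4)
  then have wK: "norm w > K * norm e" using nc by (simp add: algebra_simps)
  then have wpos: "norm w > 0" using K by (smt (verit) mult_nonneg_nonneg norm_ge_zero)
  have ws: "norm w \<le> s" unfolding w_def s_def by (rule norm_triangle_ineq4)
  then have spos: "s > 0" using wpos by linarith
  have \<sigma>pos: "\<sigma> > 0" using spos by (simp add: \<sigma>_def)
  have M: "(p - 1) * \<sigma> * norm w ^ 2 \<le> (phi p a - phi p b) \<bullet> w"
    using phi_mono[OF p, of a b] by (simp add: \<sigma>_def s_def w_def)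
  have L: "norm (phi p a - phi p b) \<le> 4 * \<sigma> * norm w"
    using phi_lip[OF p, of a b] spos by (simp add: \<sigma>_def s_def w_def)
  have "(phi p a - phi p b) \<bullet> w = (phi p a - phi p b) \<bullet> e - (phi p a - phi p b) \<bullet> d"
    by (simp add: dw inner_diff_right)
  also have "\<dots> \<le> norm (phi p a - phi p b) * norm e + c * norm d powr q"
    using I norm_cauchy_schwarz[of "phi p a - phi p b" e] by linarith
  also have "\<dots> \<le> 4 * \<sigma> * norm w * norm e + c * norm d powr q"
    using L by (intro add_right_mono mult_right_mono) auto
  finally have main: "(p - 1) * \<sigma> * norm w ^ 2 \<le> 4 * \<sigma> * norm w * norm e + c * norm d powr q"
    using M by linarith
  have "norm d \<le> norm e + norm w" unfolding dw by (rule norm_triangle_ineq4)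
  also have "\<dots> \<le> (1 + 1/K) * norm w" using wK K by (simp add: field_simps)
  finally have dle: "norm d \<le> (1 + 1/K) * norm w" .
  have "norm d powr q \<le> ((1 + 1/K) * norm w) powr q"
    by (rule powr_mono2) (use q dle in auto)
  also have "\<dots> = (1 + 1/K) powr q * norm w powr q"
    using K by (simp add: powr_mult)
  finally have dq1: "norm d powr q \<le> (1 + 1/K) powr q * norm w powr q" .
  have "norm w powr q = norm w powr (q - 2) * norm w ^ 2"
  proof -
    have "norm w powr q = norm w powr (q - 2) * norm w powr 2" using powr_add[of "norm w" "q - 2" 2] by simp
    moreover have "norm w powr 2 = norm w ^ 2" by (rule powr_numeral) (use wpos in simp)
    ultimately show ?thesis by simp
  qed
  also have "\<dots> \<le> s powr (q - 2) * norm w ^ 2"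
    by (intro mult_right_mono powr_mono2) (use q ws in auto)
  also have "s powr (q - 2) = \<sigma> * s powr (q - p)"
    using spos by (simp add: \<sigma>_def flip: powr_add)
  finally have wq: "norm w powr q \<le> \<sigma> * s powr (q - p) * norm w ^ 2" .
  have dq: "norm d powr q \<le> (1 + 1/K) powr q * (\<sigma> * s powr (q - p) * norm w ^ 2)"
    using dq1 wq by (meson order.trans mult_left_mono powr_ge_zero)
  have "c * norm d powr q \<le> c * ((1 + 1/K) powr q * (\<sigma> * s powr (q - p) * norm w ^ 2))"
    using dq c by (intro mult_left_mono) auto
  also have "\<dots> = (c * (1 + 1/K) powr q * s powr (q - p)) * (\<sigma> * norm w ^ 2)"
    by (simp add: algebra_simps)
  also have "\<dots> \<le> (\<theta> * (p - 1)) * (\<sigma> * norm w ^ 2)"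
    using sm spos \<sigma>pos by (intro mult_right_mono) (auto simp: s_def)
  finally have "(p - 1) * \<sigma> * norm w ^ 2 \<le> 4 * \<sigma> * norm w * norm e + \<theta> * (p - 1) * (\<sigma> * norm w ^ 2)"
    using main by linarith
  then have "((1 - \<theta>) * (p - 1) * norm w) * (\<sigma> * norm w) \<le> (4 * norm e) * (\<sigma> * norm w)"
    by (simp add: algebra_simps power2_eq_square)
  then have "(1 - \<theta>) * (p - 1) * norm w \<le> 4 * norm e"
    using \<sigma>pos wpos by (simp add: mult_le_cancel_right)
  then have nw: "norm w * ((1 - \<theta>) * (p - 1)) \<le> 4 * norm e" by (simp add: mult.commute)
  have X: "(1 - \<theta>) * (p - 1) > 0" using th p by simp
  have "norm w \<le> 4 * norm e / ((1 - \<theta>) * (p - 1))"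
    by (subst pos_le_divide_eq[OF X]) (rule nw)
  then have "norm w \<le> 4 / ((1 - \<theta>) * (p - 1)) * norm e" by simp
  also have "\<dots> \<le> K * norm e" using K by (intro mult_right_mono) auto
  finally show False using wK by simp
qed

lemma params:
  fixes p q c :: real
  assumes p: "1 < p" "p \<le> 2" and q: "q \<ge> 2" and c: "c > 0" and c2: "p = 2 \<Longrightarrow> c < 1"
  shows "\<exists>\<theta> K S. 0 \<le> \<theta> \<and> \<theta> < 1 \<and> K > 0 \<and> 4 / ((1 - \<theta>) * (p - 1)) \<le> K \<and> S > 0 \<and>
     (\<forall>s. 0 < s \<and> s \<le> S \<longrightarrow> c * (1 + 1/K) powr q * s powr (q - p) \<le> \<theta> * (p - 1))"
proof (cases "p = 2")
  case False
  then have pl: "p < 2" using p by simp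
  define K where "K = 8 / (p - 1)"
  have Kp: "K > 0" using p by (simp add: K_def)
  define X where "X = (p - 1) / (2 * c * (1 + 1/K) powr q)"
  have "0 < 1/K" using Kp by simp
  then have "1 + 1/K > 0" by linarith
  then have "(1 + 1/K) powr q > 0" by simp
  then have Xp: "X > 0" using p c Kp by (simp add: X_def)
  define S where "S = X powr (1 / (q - p))"
  have qp: "q - p > 0" using pl q by simp
  have "\<forall>s. 0 < s \<and> s \<le> S \<longrightarrow> c * (1 + 1/K) powr q * s powr (q - p) \<le> 1/2 * (p - 1)"
  proof (intro allI impI)
    fix s assume s: "0 < s \<and> s \<le> S"
    have "s powr (q - p) \<le> S powr (q - p)" by (rule powr_mono2) (use s qp in auto)
    also have "\<dots> = X" using Xp qp by (simp add: S_def powr_powr)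
    finally have "c * (1 + 1/K) powr q * s powr (q - p) \<le> c * (1 + 1/K) powr q * X"
      using c by (intro mult_left_mono) auto
    also have "\<dots> = 1/2 * (p - 1)" using c Kp by (simp add: X_def field_simps)
    finally show "c * (1 + 1/K) powr q * s powr (q - p) \<le> 1/2 * (p - 1)" .
  qed
  moreover have "4 / ((1 - 1/2) * (p - 1)) \<le> K" by (simp add: K_def)
  moreover have "S > 0" using Xp by (simp add: S_def)
  ultimately show ?thesis using Kp by (intro exI[of _ "1/2"] exI[of _ K] exI[of _ S]) auto
next
  case True
  have c1: "c < 1" using c2 True by simp
  define \<theta> where "\<theta> = (1 + c) / 2"
  define lm where "lm = (1 + c) / (2 * c)"
  have lam: "lm > 1" using c c1 by (simp add: lm_def field_simps)
  have lq: "lm powr (1 / q) > 1"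
    using powr_less_mono2[of "1/q" 1 lm] lam q by simp
  define K where "K = max (4 / (1 - \<theta>)) (1 / (lm powr (1 / q) - 1))"
  have Kp: "K > 0" using c1 by (simp add: K_def \<theta>_def less_max_iff_disj)
  have "1 / (lm powr (1 / q) - 1) \<le> K" by (simp add: K_def)
  then have "1 / K \<le> lm powr (1 / q) - 1" using lq Kp by (simp add: field_simps)
  then have "(1 + 1/K) powr q \<le> (lm powr (1/q)) powr q"
    using Kp q by (intro powr_mono2) auto
  also have "\<dots> = lm" using lam q by (simp add: powr_powr)
  finally have Kl: "(1 + 1/K) powr q \<le> lm" .
  have "\<forall>s. 0 < s \<and> s \<le> 1 \<longrightarrow> c * (1 + 1/K) powr q * s powr (q - p) \<le> \<theta> * (p - 1)"
  proof (intro allI impI)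
    fix s :: real assume s: "0 < s \<and> s \<le> 1"
    have "s powr (q - p) \<le> 1" using s q True by (intro powr_le1) auto
    then have "c * (1 + 1/K) powr q * s powr (q - p) \<le> c * (1 + 1/K) powr q * 1"
      using c by (intro mult_left_mono) auto
    also have "\<dots> \<le> c * lm" using Kl c by simp
    also have "\<dots> = \<theta> * (p - 1)" using c True by (simp add: lm_def \<theta>_def)
    finally show "c * (1 + 1/K) powr q * s powr (q - p) \<le> \<theta> * (p - 1)" .
  qed
  moreover have "4 / ((1 - \<theta>) * (p - 1)) \<le> K" using True by (simp add: K_def)
  moreover have "0 \<le> \<theta>" "\<theta> < 1" using c c1 by (auto simp: \<theta>_def)
  ultimately show ?thesis using Kp by (intro exI[of _ \<theta>] exI[of _ K] exI[of _ 1]) auto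
qed

lemma small_powr:
  fixes A B \<alpha> :: real
  assumes "A \<ge> 0" "\<alpha> > 0" "B > 0"
  shows "\<exists>r>0. \<forall>t. 0 \<le> t \<and> t \<le> r \<longrightarrow> A * t powr \<alpha> \<le> B"
proof -
  define r where "r = (B / (A + 1)) powr (1 / \<alpha>)"
  have rp: "r > 0" using assms by (simp add: r_def)
  have "A * t powr \<alpha> \<le> B" if t: "0 \<le> t" "t \<le> r" for t
  proof -
    have "t powr \<alpha> \<le> r powr \<alpha>" by (rule powr_mono2) (use t assms in auto)
    also have "\<dots> = B / (A + 1)" using assms by (simp add: r_def powr_powr)
    finally have "A * t powr \<alpha> \<le> A * (B / (A + 1))" using assms by (intro mult_left_mono) auto
    also have "\<dots> \<le> B" using assms by (simp add: field_simps)
    finally show ?thesis .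
  qed
  then show ?thesis using rp by blast
qed



context pset begin

lemma prox_le0:
  assumes "y \<in> prox_p p gamma f x"
  shows "f y + ereal (norm (x - y) powr p / (p * gamma)) \<le> ereal (norm x powr p / (p * gamma))"
  using assms unfolding prox_p_def by (auto simp: f0 dest: spec[of _ 0])

lemma prox_frechet:
  assumes y: "y \<in> prox_p p gamma f x"
  shows "(1/gamma) *\<^sub>R phi p (x - y) \<in> frechet_subdiff f y"
proof -
  have fin: "\<bar>f y\<bar> \<noteq> \<infinity>" using sublevel(2)[OF prox_le0[OF y]] .
  then obtain fy where fy: "f y = ereal fy" by (cases "f y") auto
  define \<zeta> where "\<zeta> = (1/gamma) *\<^sub>R phi p (x - y)"
  have pg: "p * gamma > 0" using p1 gpos by simp
  have "\<exists>d>0. \<forall>z. norm (z - y) < d \<longrightarrow>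
        ereal (real_of_ereal (f y) + \<zeta> \<bullet> (z - y) - e * norm (z - y)) \<le> f z" if e: "e > 0" for e
  proof -
    define d where "d = (e * gamma / 4) powr (1 / (p - 1))"
    have dpos: "d > 0" using e gpos by (simp add: d_def)
    have "ereal (real_of_ereal (f y) + \<zeta> \<bullet> (z - y) - e * norm (z - y)) \<le> f z"
      if z: "norm (z - y) < d" for z
    proof (cases "f z")
      case PInf then show ?thesis by simp
    next
      case MInf then show ?thesis using f_not_minf by simp
    next
      case (real r)
      have "f y + ereal (norm (x - y) powr p / (p * gamma)) \<le> f z + ereal (norm (x - z) powr p / (p * gamma))"
        using y unfolding prox_p_def by blast
      then have mn: "fy + norm (x - y) powr p / (p * gamma) \<le> r + norm (x - z) powr p / (p * gamma)"
        using fy real by simp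
      define u where "u = x - y"
      define v where "v = x - z"
      have vu: "v - u = y - z" by (simp add: u_def v_def)
      have "norm (z - y) powr (p - 1) < d powr (p - 1)"
        by (rule powr_less_mono2) (use p1 z in auto)
      also have "\<dots> = e * gamma / 4" using e gpos p1 by (simp add: d_def powr_powr)
      finally have zp: "norm (z - y) powr (p - 1) < e * gamma / 4" .
      have "norm (phi p v - phi p u) \<le> 4 * norm (v - u) powr (p - 1)" by (rule phi_holder) (use p1 p2 in auto)
      also have "norm (v - u) = norm (z - y)" by (simp add: vu norm_minus_commute)
      finally have "norm (phi p v - phi p u) \<le> e * gamma" using zp by linarith
      then have "p * norm (phi p v - phi p u) * norm (v - u) \<le> p * (e * gamma) * norm (z - y)"
        using p1 by (simp add: vu norm_minus_commute mult_right_mono)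
      moreover have "norm v powr p - norm u powr p - p * (phi p u \<bullet> (v - u)) \<le> p * norm (phi p v - phi p u) * norm (v - u)"
        by (rule h_expand(2)) (use p1 p2 in auto)
      ultimately have "norm v powr p - norm u powr p \<le> p * (phi p u \<bullet> (v - u)) + p * (e * gamma) * norm (z - y)"
        by linarith
      then have D: "norm v powr p - norm u powr p \<le> p * (phi p u \<bullet> (y - z)) + p * (e * gamma) * norm (z - y)"
        by (simp only: vu)
      have "(norm v powr p - norm u powr p) / (p * gamma) \<le> (p * (phi p u \<bullet> (y - z)) + p * (e * gamma) * norm (z - y)) / (p * gamma)"
        using D pg by (intro divide_right_mono) auto
      also have "\<dots> = (phi p u \<bullet> (y - z)) / gamma + e * norm (z - y)"
        using pg p1 gpos by (simp add: field_simps)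
      finally have D2: "(norm v powr p - norm u powr p) / (p * gamma) \<le> (phi p u \<bullet> (y - z)) / gamma + e * norm (z - y)" .
      have "\<zeta> \<bullet> (z - y) = - ((phi p u \<bullet> (y - z)) / gamma)"
        by (simp add: \<zeta>_def u_def inner_diff_right algebra_simps diff_divide_distrib)
      moreover have "r \<ge> fy - (norm v powr p - norm u powr p) / (p * gamma)"
        using mn by (simp add: u_def v_def diff_divide_distrib)
      ultimately have "fy + \<zeta> \<bullet> (z - y) - e * norm (z - y) \<le> r" using D2 by linarith
      then show ?thesis using fy real by simp
    qed
    then show ?thesis using dpos by blast
  qed
  then show ?thesis using fin unfolding frechet_subdiff_def \<zeta>_def by blast
qed

lemma prox_limiting:
  assumes y: "y \<in> prox_p p gamma f x"
  shows "(1/gamma) *\<^sub>R phi p (x - y) \<in> limiting_subdiff f y"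
proof -
  have fin: "\<bar>f y\<bar> \<noteq> \<infinity>" using sublevel(2)[OF prox_le0[OF y]] .
  have "\<exists>X Z. X \<longlonglongrightarrow> y \<and> (\<lambda>k. f (X k)) \<longlonglongrightarrow> f y \<and> (\<forall>k. Z k \<in> frechet_subdiff f (X k))
      \<and> Z \<longlonglongrightarrow> (1/gamma) *\<^sub>R phi p (x - y)"
    by (rule exI[of _ "\<lambda>k. y"], rule exI[of _ "\<lambda>k. (1/gamma) *\<^sub>R phi p (x - y)"])
       (simp add: prox_frechet[OF y])
  then show ?thesis unfolding limiting_subdiff_def using fin by blast
qed

end


theorem theorem7:
  fixes f :: "'a::euclidean_space \<Rightarrow> ereal"
    and p q M eps rho gamma :: real
  assumes p: "1 < p" "p \<le> 2"
    and proper: "proper_fun f" and lsc: "lsc_fun f"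
    and M: "M > 0" and calm: "p_calm p f 0 M"
    and f0: "f 0 = 0"
    and q: "q \<ge> 2"
    and zero_sub: "0 \<in> limiting_subdiff f 0"
    and eps: "0 < eps" "eps < 1/2" and rho: "rho > 0"
    and preg: "q_prox_regular q f 0 0 eps rho"
    and gamma: "0 < gamma"
      "gamma < min (2 powr (1 - p) / (M * p)) (kappa p * (2 * eps) powr (p - 2) / rho)"
  shows "\<exists>U. open U \<and> 0 \<in> U \<and> U \<subseteq> ball 0 eps \<and>
     (let Lp = (4 * eps * (kappa p + 1) / (kappa p - rho * gamma * (2 * eps) powr (2 - p))) powr (1 / q);
          LLp = 2 powr (2 - p) / gamma * ((2 * eps) powr ((q - 1) / q) + Lp) powr (p - 1)
      in (\<forall>x\<in>U. \<exists>!y. y \<in> prox_p p gamma f x)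
       \<and> (\<forall>x1\<in>U. \<forall>x2\<in>U. \<forall>y1 y2. y1 \<in> prox_p p gamma f x1 \<longrightarrow> y2 \<in> prox_p p gamma f x2 \<longrightarrow>
             norm (y2 - y1) \<le> Lp * norm (x2 - x1) powr (1 / q))
       \<and> (\<forall>x\<in>U. \<bar>env_p p gamma f x\<bar> \<noteq> \<infinity>)
       \<and> (\<exists>g. (\<forall>x\<in>U. ((\<lambda>y. real_of_ereal (env_p p gamma f y)) has_derivative (\<lambda>h. g x \<bullet> h)) (at x))
            \<and> (\<forall>x1\<in>U. \<forall>x2\<in>U. norm (g x2 - g x1) \<le> LLp * norm (x2 - x1) powr ((p - 1) / q))))"
proof -
  have g1: "gamma < 2 powr (1 - p) / (M * p)" and g2: "gamma < kappa p * (2 * eps) powr (p - 2) / rho"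
    using gamma(2) by auto
  have "2 powr (1 - p) < 1" by (rule powr_less_one) (use p in auto)
  then have Mpg: "M * p * gamma < 1" using g1 M p by (simp add: field_simps)
  interpret pset f p gamma M
    by unfold_locales (use p gamma(1) M Mpg calm f0 lsc in auto)
  define c where "c = rho * gamma"
  have cpos: "c > 0" using rho gamma by (simp add: c_def)
  define \<kappa> where "\<kappa> = kappa p"
  have e2: "2 * eps > 0" using eps by simp
  have kap: "c * (2 * eps) powr (2 - p) < \<kappa>"
  proof -
    have "c < \<kappa> * (2 * eps) powr (p - 2)" using g2 rho by (simp add: c_def \<kappa>_def field_simps)
    then have "c * (2 * eps) powr (2 - p) < \<kappa> * (2 * eps) powr (p - 2) * (2 * eps) powr (2 - p)"
      using e2 by (intro mult_strict_right_mono) auto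
    also have "\<dots> = \<kappa>" using e2 by (simp flip: powr_add add: mult.assoc)
    finally show ?thesis .
  qed
  have kpos: "\<kappa> > 0" using kap cpos e2
    by (smt (verit) mult_pos_pos powr_gt_zero)
  have c2: "c < 1" if "p = 2"
    using kap that eps by (simp add: \<kappa>_def kappa_def)
  define Lp where "Lp = (4 * eps * (kappa p + 1) / (kappa p - rho * gamma * (2 * eps) powr (2 - p))) powr (1 / q)"
  define LLp where "LLp = 2 powr (2 - p) / gamma * ((2 * eps) powr ((q - 1) / q) + Lp) powr (p - 1)"
  have Lp_pos: "Lp > 0"
  proof -
    have X: "4 * eps * (kappa p + 1) / (kappa p - rho * gamma * (2 * eps) powr (2 - p)) > 0"
      using kap kpos eps by (simp add: \<kappa>_def c_def)
    show ?thesis unfolding Lp_def using X by (metis powr_gt_zero order_less_irrefl)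
  qed
  have LLp_pos: "LLp > 0"
  proof -
    have "(2 * eps) powr ((q - 1) / q) + Lp > 0" using Lp_pos by (simp add: add_nonneg_pos)
    then show ?thesis using gamma(1) by (simp add: LLp_def)
  qed
  obtain \<theta> K S where th: "0 \<le> \<theta>" "\<theta> < 1" and K: "K > 0" "4 / ((1 - \<theta>) * (p - 1)) \<le> K"
    and S: "S > 0" and Ssm: "\<And>s. 0 < s \<Longrightarrow> s \<le> S \<Longrightarrow> c * (1 + 1/K) powr q * s powr (q - p) \<le> \<theta> * (p - 1)"
    using params[OF p q cpos c2] by blast
  have Cb: "Cb > 0" by (rule Cb_pos)
  obtain r2 where r2: "r2 > 0" "\<And>t. 0 \<le> t \<Longrightarrow> t \<le> r2 \<Longrightarrow> (1/gamma) * t powr (p - 1) \<le> eps"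
    using small_powr[of "1/gamma" "p - 1" eps] gamma p eps by auto
  obtain r3 where r3: "r3 > 0" "\<And>t. 0 \<le> t \<Longrightarrow> t \<le> r3 \<Longrightarrow> (1/(p*gamma)) * t powr p \<le> eps/2"
    using small_powr[of "1/(p*gamma)" p "eps/2"] gamma p eps by auto
  obtain r5 where r5: "r5 > 0" "\<And>t. 0 \<le> t \<Longrightarrow> t \<le> r5 \<Longrightarrow> (1 + K) * t powr (1 - 1/q) \<le> Lp"
    using small_powr[of "1 + K" "1 - 1/q" Lp] K q Lp_pos by auto
  obtain r6 where r6: "r6 > 0" "\<And>t. 0 \<le> t \<Longrightarrow> t \<le> r6 \<Longrightarrow> (4/gamma * (2 + K) powr (p - 1)) * t powr ((p - 1) * (q - 1) / q) \<le> LLp"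
    using small_powr[of "4/gamma * (2 + K) powr (p - 1)" "(p - 1) * (q - 1) / q" LLp] K q p gamma LLp_pos by auto
  define r where "r = min eps (min (eps / Cb) (min (r2 / (1 + Cb)) (min r3 (min (S / (2 * (1 + Cb))) (min (r5 / 2) (r6 / 2))))))"
  have rpos: "r > 0" using eps Cb r2 r3 S r5 r6 by (simp add: r_def)
  have rle: "r \<le> eps" "r \<le> eps / Cb" "r \<le> r2 / (1 + Cb)" "r \<le> r3" "r \<le> S / (2 * (1 + Cb))"
    "r \<le> r5 / 2" "r \<le> r6 / 2" unfolding r_def by (simp_all only: min_le_iff_disj order_refl simp_thms)
  define U where "U = ball (0::'a) r"

  have U: "open U" "0 \<in> U" "U \<subseteq> ball 0 eps" using rpos rle(1) by (auto simp: U_def)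
  have preg': "\<And>x z x'. x \<in> cball 0 eps \<Longrightarrow> z \<in> limiting_subdiff f x \<Longrightarrow> z \<in> cball 0 eps \<Longrightarrow>
      f x < ereal eps \<Longrightarrow> x' \<in> cball 0 eps \<Longrightarrow>
      f x' \<ge> f x + ereal (z \<bullet> (x' - x) - rho / 2 * norm (x' - x) powr q)"
    using preg unfolding q_prox_regular_def by (auto simp: f0)
  have loc: "norm y \<le> eps \<and> norm (x - y) \<le> (1 + Cb) * r \<and> \<bar>f y\<bar> \<noteq> \<infinity> \<and> f y < ereal eps
      \<and> norm ((1/gamma) *\<^sub>R phi p (x - y)) \<le> eps"
    if x: "x \<in> U" and y: "y \<in> prox_p p gamma f x" for x y
  proof -
    have sl: "f y + ereal (norm (x - y) powr p / (p * gamma)) \<le> ereal (norm x powr p / (p * gamma))"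
      by (rule prox_le0[OF y])
    have nx: "norm x < r" using x by (simp add: U_def)
    have ny: "norm y \<le> Cb * norm x" by (rule sublevel(1)[OF sl])
    also have "\<dots> \<le> Cb * r" using nx Cb by simp
    also have "\<dots> \<le> eps" using rle(2) Cb by (simp add: field_simps)
    finally have ny2: "norm y \<le> eps" .
    have "norm (x - y) \<le> norm x + norm y" by (rule norm_triangle_ineq4)
    also have "\<dots> \<le> r + Cb * r" using nx ny Cb by (smt (verit) mult_left_mono)
    finally have nxy: "norm (x - y) \<le> (1 + Cb) * r" by (simp add: algebra_simps)
    have fin: "\<bar>f y\<bar> \<noteq> \<infinity>" by (rule sublevel(2)[OF sl])
    have "real_of_ereal (f y) \<le> norm x powr p / (p * gamma) - norm (x - y) powr p / (p * gamma)"
      by (rule sublevel(3)[OF sl])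
    also have "\<dots> \<le> norm x powr p / (p * gamma)" using p gamma by simp
    also have "\<dots> = (1/(p*gamma)) * norm x powr p" by simp
    also have "\<dots> \<le> eps / 2" using r3(2)[of "norm x"] nx rle(4) by simp
    finally have "real_of_ereal (f y) < eps" using eps by simp
    then have fy: "f y < ereal eps" using fin by (cases "f y") auto
    have "norm ((1/gamma) *\<^sub>R phi p (x - y)) = (1/gamma) * norm (x - y) powr (p - 1)"
      using gamma by (simp add: norm_phi)
    also have "\<dots> \<le> eps"
    proof (rule r2(2))
      show "norm (x - y) \<le> r2" using nxy rle(3) Cb by (simp add: field_simps)
    qed simp
    finally show ?thesis using ny2 nxy fin fy by simp
  qed
  have pair: "norm (y2 - y1) \<le> (1 + K) * norm (x2 - x1)"
    if x1: "x1 \<in> U" and x2: "x2 \<in> U" and y1: "y1 \<in> prox_p p gamma f x1" and y2: "y2 \<in> prox_p p gamma f x2"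
    for x1 x2 y1 y2
  proof -
    note l1 = loc[OF x1 y1] and l2 = loc[OF x2 y2]
    define z1 where "z1 = (1/gamma) *\<^sub>R phi p (x1 - y1)"
    define z2 where "z2 = (1/gamma) *\<^sub>R phi p (x2 - y2)"
    have s1: "z1 \<in> limiting_subdiff f y1" unfolding z1_def by (rule prox_limiting[OF y1])
    have s2: "z2 \<in> limiting_subdiff f y2" unfolding z2_def by (rule prox_limiting[OF y2])
    have i1: "f y2 \<ge> f y1 + ereal (z1 \<bullet> (y2 - y1) - rho / 2 * norm (y2 - y1) powr q)"
      by (rule preg') (use l1 l2 s1 in \<open>auto simp: z1_def\<close>)
    have i2: "f y1 \<ge> f y2 + ereal (z2 \<bullet> (y1 - y2) - rho / 2 * norm (y1 - y2) powr q)"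
      by (rule preg') (use l1 l2 s2 in \<open>auto simp: z2_def\<close>)
    obtain v1 where v1: "f y1 = ereal v1" using l1 by (cases "f y1") auto
    obtain v2 where v2: "f y2 = ereal v2" using l2 by (cases "f y2") auto
    have j1: "v2 \<ge> v1 + z1 \<bullet> (y2 - y1) - rho / 2 * norm (y2 - y1) powr q" using i1 v1 v2 by simp
    have j2: "v1 \<ge> v2 + z2 \<bullet> (y1 - y2) - rho / 2 * norm (y2 - y1) powr q"
      using i2 v1 v2 by (simp add: norm_minus_commute)
    have "z2 \<bullet> (y1 - y2) = - (z2 \<bullet> (y2 - y1))" by (simp add: inner_diff_right)
    then have "(z2 - z1) \<bullet> (y2 - y1) \<ge> - rho * norm (y2 - y1) powr q"
      using j1 j2 by (simp add: inner_diff_left)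
    moreover have "z2 - z1 = (1/gamma) *\<^sub>R (phi p (x2 - y2) - phi p (x1 - y1))"
      by (simp add: z1_def z2_def scaleR_diff_right)
    ultimately have "(1/gamma) * ((phi p (x2 - y2) - phi p (x1 - y1)) \<bullet> (y2 - y1)) \<ge> - rho * norm (y2 - y1) powr q"
      by simp
    then have I: "(phi p (x2 - y2) - phi p (x1 - y1)) \<bullet> (y2 - y1) \<ge> - c * norm (y2 - y1) powr q"
      using gamma(1) by (simp add: c_def field_simps)
    show ?thesis
    proof (rule key_estimate[OF p q th K _ _ I])
      show "x2 - y2 - (x1 - y1) = x2 - x1 - (y2 - y1)" by simp
      show "0 \<le> c" using cpos by simp
      assume sp: "norm (x2 - y2) + norm (x1 - y1) > 0"
      have "norm (x2 - y2) + norm (x1 - y1) \<le> 2 * ((1 + Cb) * r)" using l1 l2 by simp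
      also have "\<dots> \<le> S" using rle(5) Cb by (simp add: field_simps)
      finally show "c * (1 + 1 / K) powr q * (norm (x2 - y2) + norm (x1 - y1)) powr (q - p) \<le> \<theta> * (p - 1)"
        using Ssm sp by blast
    qed
  qed
  have e2r: "norm (x2 - x1) \<le> 2 * r" if "x1 \<in> U" "x2 \<in> U" for x1 x2
  proof -
    have "norm (x2 - x1) \<le> norm x2 + norm x1" by (rule norm_triangle_ineq4)
    then show ?thesis using that by (simp add: U_def)
  qed
  have holder: "norm (y2 - y1) \<le> Lp * norm (x2 - x1) powr (1 / q)"
    if x1: "x1 \<in> U" and x2: "x2 \<in> U" and y1: "y1 \<in> prox_p p gamma f x1" and y2: "y2 \<in> prox_p p gamma f x2"
    for x1 x2 y1 y2
  proof (cases "x2 = x1")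
    case True
    then show ?thesis using pair[OF x1 x2 y1 y2] by simp
  next
    case False
    define t where "t = norm (x2 - x1)"
    have tpos: "t > 0" using False by (simp add: t_def)
    have tt: "t = t powr (1 - 1/q) * t powr (1/q)" using tpos by (simp flip: powr_add)
    have "(1 + K) * t powr (1 - 1/q) \<le> Lp"
      using r5(2)[of t] e2r[OF x1 x2] rle(6) tpos by (simp add: t_def)
    then have "(1 + K) * t \<le> Lp * t powr (1/q)"
      by (subst tt) (simp add: mult.assoc[symmetric] mult_right_mono)
    then show ?thesis using pair[OF x1 x2 y1 y2] by (simp add: t_def)
  qed
  have uniq: "\<forall>x\<in>U. \<exists>!y. y \<in> prox_p p gamma f x"
  proof
    fix x assume x: "x \<in> U"
    obtain y where y: "y \<in> prox_p p gamma f x" using prox_exists by blast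
    show "\<exists>!y. y \<in> prox_p p gamma f x"
    proof (rule ex1I[where a=y])
      show "y \<in> prox_p p gamma f x" by (rule y)
      fix y' assume "y' \<in> prox_p p gamma f x"
      from pair[OF x x y this] show "y' = y" by simp
    qed
  qed
  define P where "P x = (SOME y. y \<in> prox_p p gamma f x)" for x
  have P: "P x \<in> prox_p p gamma f x" for x
    unfolding P_def using prox_exists by (rule someI_ex)
  define hh where "hh u = norm u powr p / (p * gamma)" for u :: 'a
  define fr where "fr x = real_of_ereal (f (P x))" for x
  have frP: "f (P x) = ereal (fr x)" if "x \<in> U" for x
    using loc[OF that P] by (cases "f (P x)") (auto simp: fr_def)
  have env: "env_p p gamma f x = ereal (fr x + hh (x - P x))" if x: "x \<in> U" for x
  proof -
    have "env_p p gamma f x = f (P x) + ereal (hh (x - P x))"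
      unfolding env_p_def
    proof (rule INF_eqI)
      show "\<And>i. i \<in> UNIV \<Longrightarrow> f (P x) + ereal (hh (x - P x)) \<le> f i + ereal (norm (x - i) powr p / (p * gamma))"
        using P[of x] by (simp add: prox_p_def hh_def)
      show "\<And>y. (\<And>i. i \<in> UNIV \<Longrightarrow> y \<le> f i + ereal (norm (x - i) powr p / (p * gamma))) \<Longrightarrow>
         y \<le> f (P x) + ereal (hh (x - P x))"
        by (simp add: hh_def)
    qed
    then show ?thesis using frP[OF x] by simp
  qed
  have envle: "env_p p gamma f x \<le> f y + ereal (hh (x - y))" for x y
    unfolding env_p_def hh_def by (rule INF_lower) simp
  define E where "E x = real_of_ereal (env_p p gamma f x)" for x
  have E: "E x = fr x + hh (x - P x)" if "x \<in> U" for x using env[OF that] by (simp add: E_def)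
  have Ele: "E x' \<le> fr x + hh (x' - P x)" if "x \<in> U" "x' \<in> U" for x x'
    using envle[of x' "P x"] env[OF that(2)] frP[OF that(1)] by (simp add: E_def)
  define G where "G x = (1/gamma) *\<^sub>R phi p (x - P x)" for x
  have pg: "p * gamma > 0" using p gamma by simp
  have phiK: "norm (phi p a - phi p b) \<le> 4 * (B * t) powr (p - 1)"
    if "norm (a - b) \<le> B * t" for a b :: 'a and B t
  proof -
    have "norm (phi p a - phi p b) \<le> 4 * norm (a - b) powr (p - 1)" by (rule phi_holder[OF p])
    also have "\<dots> \<le> 4 * (B * t) powr (p - 1)"
      using that p by (simp add: powr_mono2)
    finally show ?thesis .
  qed
  have rem: "\<bar>E x' - E x - G x \<bullet> (x' - x)\<bar> \<le> 4 / gamma * ((1 + K) * norm (x' - x)) powr (p - 1) * norm (x' - x)"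
    if x: "x \<in> U" and x': "x' \<in> U" for x x'
  proof -
    have up: "E x' - E x - G x \<bullet> (x' - x) \<le> 4 / gamma * ((1 + K) * norm (x' - x)) powr (p - 1) * norm (x' - x)"
    proof -
      define u where "u = x - P x"
      define v where "v = x' - P x"
      have vu: "v - u = x' - x" by (simp add: u_def v_def)
      have H1: "E x' - E x \<le> hh v - hh u" using Ele[OF x x'] E[OF x] by (simp add: u_def v_def)
      have H2: "norm v powr p - norm u powr p - p * (phi p u \<bullet> (v - u)) \<le> p * norm (phi p v - phi p u) * norm (v - u)"
        by (rule h_expand(2)[OF p])
      have H3: "norm (phi p v - phi p u) \<le> 4 * ((1 + K) * norm (x' - x)) powr (p - 1)"
        by (rule phiK) (use K in \<open>simp add: vu algebra_simps\<close>)
      define X where "X = phi p u \<bullet> (v - u)"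
      define N where "N = norm (phi p v - phi p u)"
      define W where "W = norm (v - u)"
      define B4 where "B4 = 4 * ((1 + K) * norm (x' - x)) powr (p - 1)"
      have "hh v - hh u = (norm v powr p - norm u powr p) / (p * gamma)" by (simp add: hh_def diff_divide_distrib)
      also have "\<dots> \<le> (p * X + p * N * W) / (p * gamma)"
        by (rule divide_right_mono) (use H2 pg in \<open>auto simp: X_def N_def W_def\<close>)
      also have "\<dots> = X / gamma + N * W / gamma" using p gamma(1) by (simp add: field_simps)
      also have "N * W / gamma \<le> B4 * W / gamma"
        using H3 gamma(1) by (intro divide_right_mono mult_right_mono) (auto simp: N_def B4_def W_def)
      finally have "E x' - E x - X / gamma \<le> B4 * W / gamma" using H1 by linarith
      then have "E x' - E x - (1/gamma) * (phi p u \<bullet> (v - u)) \<le> (1/gamma) * (4 * ((1 + K) * norm (x' - x)) powr (p - 1)) * norm (v - u)"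
        by (simp add: X_def B4_def W_def)
      then show ?thesis unfolding vu by (simp add: G_def u_def)
    qed
    have lo: "- (4 / gamma * ((1 + K) * norm (x' - x)) powr (p - 1) * norm (x' - x)) \<le> E x' - E x - G x \<bullet> (x' - x)"
    proof -
      define u where "u = x - P x'"
      define v where "v = x' - P x'"
      have vu: "v - u = x' - x" by (simp add: u_def v_def)
      have H1: "E x' - E x \<ge> hh v - hh u" using Ele[OF x' x] E[OF x'] by (simp add: u_def v_def)
      have H2: "0 \<le> norm v powr p - norm u powr p - p * (phi p u \<bullet> (v - u))"
        by (rule h_expand(1)[OF p])
      have "hh v - hh u = (norm v powr p - norm u powr p) / (p * gamma)" by (simp add: hh_def diff_divide_distrib)
      also have "\<dots> \<ge> (p * (phi p u \<bullet> (v - u))) / (p * gamma)"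
        by (rule divide_right_mono) (use H2 pg in auto)
      also have "(p * (phi p u \<bullet> (v - u))) / (p * gamma) = (1/gamma) * (phi p u \<bullet> (x' - x))"
        using p gamma(1) by (simp add: vu)
      finally have A: "E x' - E x \<ge> (1/gamma) * (phi p u \<bullet> (x' - x))" using H1 by linarith
      have "norm (u - (x - P x)) \<le> (1 + K) * norm (x' - x)"
        using pair[OF x x' P P] by (simp add: u_def norm_minus_commute)
      then have B: "norm (phi p u - phi p (x - P x)) \<le> 4 * ((1 + K) * norm (x' - x)) powr (p - 1)"
        by (rule phiK)
      have "(phi p u - phi p (x - P x)) \<bullet> (x' - x) \<ge> - (norm (phi p u - phi p (x - P x)) * norm (x' - x))"
        using Cauchy_Schwarz_ineq2[of "phi p u - phi p (x - P x)" "x' - x"] by linarith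
      also have "- (norm (phi p u - phi p (x - P x)) * norm (x' - x)) \<ge> - (4 * ((1 + K) * norm (x' - x)) powr (p - 1) * norm (x' - x))"
        using B by (simp add: mult_right_mono)
      finally have C: "(1/gamma) * ((phi p u - phi p (x - P x)) \<bullet> (x' - x)) \<ge> (1/gamma) * - (4 * ((1 + K) * norm (x' - x)) powr (p - 1) * norm (x' - x))"
        using gamma(1) by (intro mult_left_mono) auto
      have "E x' - E x - G x \<bullet> (x' - x) \<ge> (1/gamma) * ((phi p u - phi p (x - P x)) \<bullet> (x' - x))"
        using A by (simp add: G_def inner_diff_left algebra_simps)
      with C show ?thesis by simp
    qed
    from up lo show ?thesis by (simp add: abs_le_iff)
  qed
  have deriv: "((\<lambda>y. real_of_ereal (env_p p gamma f y)) has_derivative (\<lambda>h. G x \<bullet> h)) (at x)"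
    if x: "x \<in> U" for x
    unfolding has_derivative_iff_norm
  proof (intro conjI)
    show "bounded_linear (\<lambda>h. G x \<bullet> h)" by (rule bounded_linear_inner_right)
    define B where "B y = 4 / gamma * ((1 + K) * norm (y - x)) powr (p - 1)" for y
    have "(B \<longlongrightarrow> 4 / gamma * ((1 + K) * norm (x - x)) powr (p - 1)) (at x)"
      unfolding B_def using p K by (intro tendsto_intros) auto
    then have Bt: "(B \<longlongrightarrow> 0) (at x)" using p by simp
    have ev: "eventually (\<lambda>y. norm (norm (real_of_ereal (env_p p gamma f y) - real_of_ereal (env_p p gamma f x) - G x \<bullet> (y - x)) / norm (y - x)) \<le> B y) (at x)"
      unfolding eventually_at_topological
    proof (intro exI[of _ U] conjI ballI impI)
      show "open U" "x \<in> U" using U x by auto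
      fix y assume y: "y \<in> U" "y \<noteq> x"
      have "\<bar>E y - E x - G x \<bullet> (y - x)\<bar> \<le> B y * norm (y - x)" using rem[OF x y(1)] by (simp add: B_def)
      then show "norm (norm (real_of_ereal (env_p p gamma f y) - real_of_ereal (env_p p gamma f x) - G x \<bullet> (y - x)) / norm (y - x)) \<le> B y"
        using y by (simp add: E_def divide_le_eq)
    qed
    show "((\<lambda>y. norm (real_of_ereal (env_p p gamma f y) - real_of_ereal (env_p p gamma f x) - G x \<bullet> (y - x)) / norm (y - x)) \<longlongrightarrow> 0) (at x)"
      by (rule Lim_null_comparison[OF ev Bt])
  qed
  have gh: "norm (G x2 - G x1) \<le> LLp * norm (x2 - x1) powr ((p - 1) / q)"
    if x1: "x1 \<in> U" and x2: "x2 \<in> U" for x1 x2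
  proof -
    define t where "t = norm (x2 - x1)"
    have ab: "norm ((x2 - P x2) - (x1 - P x1)) \<le> (2 + K) * t"
    proof -
      have "norm ((x2 - P x2) - (x1 - P x1)) \<le> norm (x2 - x1) + norm (P x2 - P x1)"
        by (metis (no_types, lifting) add_diff_add diff_add_cancel norm_triangle_ineq4)
      then show ?thesis using pair[OF x1 x2 P P] by (simp add: t_def algebra_simps)
    qed
    have "norm (G x2 - G x1) = (1/gamma) * norm (phi p (x2 - P x2) - phi p (x1 - P x1))"
      using gamma(1) by (simp add: G_def flip: scaleR_diff_right)
    also have "\<dots> \<le> (1/gamma) * (4 * ((2 + K) * t) powr (p - 1))"
      using phiK[OF ab] gamma(1) by (intro mult_left_mono) auto
    also have "\<dots> \<le> LLp * t powr ((p - 1) / q)"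
    proof (cases "t = 0")
      case True then show ?thesis using p by simp
    next
      case False
      then have tpos: "t > 0" by (simp add: t_def)
      have "((2 + K) * t) powr (p - 1) = (2 + K) powr (p - 1) * (t powr ((p - 1) * (q - 1) / q) * t powr ((p - 1) / q))"
      proof -
        have ex: "(p - 1) * (q - 1) / q + (p - 1) / q = p - 1" using q by (simp add: field_simps)
        have "t powr ((p - 1) * (q - 1) / q) * t powr ((p - 1) / q) = t powr (p - 1)"
          by (subst powr_add[symmetric]) (simp only: ex)
        moreover have "((2 + K) * t) powr (p - 1) = (2 + K) powr (p - 1) * t powr (p - 1)"
          using K tpos by (simp add: powr_mult)
        ultimately show ?thesis by simp
      qed
      then have "(1/gamma) * (4 * ((2 + K) * t) powr (p - 1)) = ((4/gamma * (2 + K) powr (p - 1)) * t powr ((p - 1) * (q - 1) / q)) * t powr ((p - 1) / q)"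
        by (simp add: algebra_simps)
      also have "\<dots> \<le> LLp * t powr ((p - 1) / q)"
        using r6(2)[of t] e2r[OF x1 x2] rle(7) tpos by (intro mult_right_mono) (auto simp: t_def)
      finally show ?thesis .
    qed
    finally show ?thesis by (simp add: t_def)
  qed
  have fin: "\<forall>x\<in>U. \<bar>env_p p gamma f x\<bar> \<noteq> \<infinity>" using env by simp
  show ?thesis
    unfolding Let_def Lp_def[symmetric] LLp_def[symmetric]
    using U uniq holder fin deriv gh by (intro exI[of _ U]) blast
qed


end
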